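(* Let $L$ be a Lelek fan, let $C\subseteq L$ be a subcontinuum of $L$ that is a Cantor fan, and let $f:L\to L$ be an embedding with $f(L)\subseteq C$. Then $f$ does not admit a retraction, i.e. there is no retraction from $L$ onto $f(L)$.
   Context: A continuum is a nonempty compact connected metric space. A dendroid is an arcwise connected, hereditarily unicoherent continuum. A point $x$ of a dendroid $X$ is a ramification point if $x$ is the top (the branch point) of some simple triod in $X$. A fan is a dendroid with at most one ramification point; this point, if it exists, is called the top of the fan. For a fan $X$, a point $x$ is an end point of $X$ if $x$ is an end point of every arc in $X$ containing $x$; $E(X)$ denotes the set of end points of $X$. A fan $X$ with top $v$ is smooth if for every $x\in X$ and every sequence $x_n\to x$ in $X$, the arcs from $v$ to $x_n$ converge (in the Hausdorff metric) to the arc from $v$ to $x$. A Lelek fan is a smooth fan $X$ with $\mathrm{Cl}(E(X))=X$. A Cantor fan is a continuum homeomorphic to $\bigcup_{c\in C}A_c\subseteq\mathbb R^2$, where $C\subseteq[0,1]$ is the Cantor middle-third set and $A_c$ is the straight segment from $(\tfrac12,0)$ to $(c,1)$. An embedding is a continuous map that is a homeomorphism onto its image. A retraction from a space $X$ onto a subspace $Y$ is a continuous map $r:X\to Y$ with $r(y)=y$ for all $y\in Y$; an embedding $f:X\to Z$ admits a retraction if there is a retraction from $Z$ onto $f(X)$. *)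

theory Defs
  imports "HOL-Analysis.Analysis"
begin

definition continuum :: "'a::metric_space set \<Rightarrow> bool" where
  "continuum X \<longleftrightarrow> X \<noteq> {} \<and> compact X \<and> connected X"

definition arc_in :: "'a::metric_space set \<Rightarrow> (real \<Rightarrow> 'a) \<Rightarrow> bool" where
  "arc_in X g \<longleftrightarrow> arc g \<and> path_image g \<subseteq> X"

definition arcwise_connected :: "'a::metric_space set \<Rightarrow> bool" where
  "arcwise_connected X \<longleftrightarrow>
     (\<forall>a\<in>X. \<forall>b\<in>X. a \<noteq> b \<longrightarrow>
        (\<exists>g. arc_in X g \<and> pathstart g = a \<and> pathfinish g = b))"

definition hereditarily_unicoherent :: "'a::metric_space set \<Rightarrow> bool" where
  "hereditarily_unicoherent X \<longleftrightarrow>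
     (\<forall>A B. A \<subseteq> X \<longrightarrow> B \<subseteq> X \<longrightarrow> continuum A \<longrightarrow> continuum B \<longrightarrow> connected (A \<inter> B))"

definition dendroid :: "'a::metric_space set \<Rightarrow> bool" where
  "dendroid X \<longleftrightarrow> continuum X \<and> arcwise_connected X \<and> hereditarily_unicoherent X"

definition ramification_point :: "'a::metric_space set \<Rightarrow> 'a \<Rightarrow> bool" where
  "ramification_point X x \<longleftrightarrow>
     (\<exists>g1 g2 g3. arc_in X g1 \<and> arc_in X g2 \<and> arc_in X g3 \<and>
        pathstart g1 = x \<and> pathstart g2 = x \<and> pathstart g3 = x \<and>
        path_image g1 \<inter> path_image g2 = {x} \<and>
        path_image g1 \<inter> path_image g3 = {x} \<and>
        path_image g2 \<inter> path_image g3 = {x})"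

definition fan :: "'a::metric_space set \<Rightarrow> bool" where
  "fan X \<longleftrightarrow> dendroid X \<and>
     (\<forall>x y. ramification_point X x \<longrightarrow> ramification_point X y \<longrightarrow> x = y)"

definition fan_top :: "'a::metric_space set \<Rightarrow> 'a \<Rightarrow> bool" where
  "fan_top X v \<longleftrightarrow> fan X \<and> v \<in> X \<and> ramification_point X v"

definition end_points :: "'a::metric_space set \<Rightarrow> 'a set" where
  "end_points X = {x \<in> X. \<forall>g. arc_in X g \<and> x \<in> path_image g \<longrightarrow>
                                   x = pathstart g \<or> x = pathfinish g}"

text \<open>The arc from a to b in X (unique in a dendroid); degenerate {a} when a = b.\<close>
definition arc_between :: "'a::metric_space set \<Rightarrow> 'a \<Rightarrow> 'a \<Rightarrow> 'a set" where
  "arc_between X a b =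
     (if a = b then {a}
      else (THE A. \<exists>g. arc_in X g \<and> pathstart g = a \<and> pathfinish g = b \<and> path_image g = A))"

definition hausdorff_dist :: "'a::metric_space set \<Rightarrow> 'a set \<Rightarrow> real" where
  "hausdorff_dist A B = max (SUP a\<in>A. infdist a B) (SUP b\<in>B. infdist b A)"

definition smooth_fan :: "'a::metric_space set \<Rightarrow> 'a \<Rightarrow> bool" where
  "smooth_fan X v \<longleftrightarrow> fan_top X v \<and>
     (\<forall>x\<in>X. \<forall>s::nat \<Rightarrow> 'a. (\<forall>n. s n \<in> X) \<and> s \<longlonglongrightarrow> x \<longrightarrow>
        (\<lambda>n. hausdorff_dist (arc_between X v (s n)) (arc_between X v x)) \<longlonglongrightarrow> 0)"

definition lelek_fan :: "'a::metric_space set \<Rightarrow> bool" where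
  "lelek_fan X \<longleftrightarrow> (\<exists>v. smooth_fan X v) \<and> closure (end_points X) = X"

primrec cantor_stage :: "nat \<Rightarrow> real set" where
  "cantor_stage 0 = {0..1}"
| "cantor_stage (Suc n) = (\<lambda>x. x / 3) ` cantor_stage n \<union> (\<lambda>x. 2/3 + x / 3) ` cantor_stage n"

definition cantor_set :: "real set" where
  "cantor_set = (\<Inter>n. cantor_stage n)"

definition cantor_fan_model :: "(real \<times> real) set" where
  "cantor_fan_model = (\<Union>c\<in>cantor_set. closed_segment (1/2, 0) (c, 1))"

definition cantor_fan :: "'a::metric_space set \<Rightarrow> bool" where
  "cantor_fan X \<longleftrightarrow> X homeomorphic cantor_fan_model"

definition embedding_on :: "'a::metric_space set \<Rightarrow> ('a \<Rightarrow> 'b::metric_space) \<Rightarrow> bool" where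
  "embedding_on X f \<longleftrightarrow> (\<exists>g. homeomorphism X (f ` X) f g)"

end

theory Submission imports Defs begin

lemma stage_sub: "cantor_stage n \<subseteq> {0..1}"
  by (induction n) auto

lemma stage_len: "{a..b} \<subseteq> cantor_stage n \<Longrightarrow> b - a \<le> (1/3::real)^n"
proof (induction n arbitrary: a b)
  case 0
  then show ?case by (cases "a \<le> b") auto
next
  case (Suc n)
  let ?A = "cantor_stage n"
  have A01: "?A \<subseteq> {0..1}" by (rule stage_sub)
  show ?case
  proof (cases "a \<le> b")
    case False
    have "(0::real) \<le> (1/3)^Suc n" by simp
    then show ?thesis using False by linarith
  next
    case ab: True
    have sub: "{a..b} \<subseteq> (\<lambda>x. x / 3) ` ?A \<union> (\<lambda>x. 2/3 + x / 3) ` ?A" using Suc.prems by simp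
    have lo: "\<And>z. z \<in> (\<lambda>x. x / 3) ` ?A \<Longrightarrow> z \<le> 1/3" using A01 by auto
    have hi: "\<And>z. z \<in> (\<lambda>x. 2/3 + x / 3) ` ?A \<Longrightarrow> z \<ge> 2/3" using A01 by auto
    consider "b < 1/2" | "a > 1/2" | "a \<le> 1/2 \<and> 1/2 \<le> b" by linarith
    then show ?thesis
    proof cases
      case 1
      have "{3*a..3*b} \<subseteq> ?A"
      proof
        fix z assume z: "z \<in> {3*a..3*b}"
        then have "z/3 \<in> {a..b}" by auto
        then have "z/3 \<in> (\<lambda>x. x / 3) ` ?A \<union> (\<lambda>x. 2/3 + x / 3) ` ?A" using sub by blast
        moreover have "z/3 \<notin> (\<lambda>x. 2/3 + x / 3) ` ?A" using hi[of "z/3"] z 1 by auto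
        ultimately show "z \<in> ?A" by auto
      qed
      from Suc.IH[OF this] show ?thesis by simp
    next
      case 2
      have "{3*a-2..3*b-2} \<subseteq> ?A"
      proof
        fix z assume z: "z \<in> {3*a-2..3*b-2}"
        then have "2/3 + z/3 \<in> {a..b}" by auto
        then have "2/3 + z/3 \<in> (\<lambda>x. x / 3) ` ?A \<union> (\<lambda>x. 2/3 + x / 3) ` ?A" using sub by blast
        moreover have "2/3 + z/3 \<notin> (\<lambda>x. x / 3) ` ?A" using lo[of "2/3 + z/3"] z 2 by auto
        ultimately show "z \<in> ?A" by auto
      qed
      from Suc.IH[OF this] show ?thesis by simp
    next
      case 3
      then have "1/2 \<in> {a..b}" by auto
      then have "1/2 \<in> (\<lambda>x. x / 3) ` ?A \<union> (\<lambda>x. 2/3 + x / 3) ` ?A" using sub by blast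
      then show ?thesis using lo[of "1/2"] hi[of "1/2"] by force
    qed
  qed
qed

lemma cantor_no_interval:
  assumes "a < b" shows "\<not> {a..b} \<subseteq> cantor_set"
proof
  assume H: "{a..b} \<subseteq> cantor_set"
  obtain n where n: "(1/3::real)^n < b - a"
    using real_arch_pow_inv[of "b-a" "1/3"] assms by auto
  have "{a..b} \<subseteq> cantor_stage n" using H unfolding cantor_set_def by auto
  from stage_len[OF this] n show False by simp
qed

definition Pt :: "real \<Rightarrow> real \<Rightarrow> real \<times> real" where
  "Pt c t = ((1-t)/2 + t*c, t)"

definition cfun :: "real \<times> real \<Rightarrow> real" where
  "cfun x = 1/2 + (fst x - 1/2) / snd x"

lemma cfun_Pt: "t \<noteq> 0 \<Longrightarrow> cfun (Pt c t) = c"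
  unfolding cfun_def Pt_def by (simp add: field_simps)

lemma snd_Pt[simp]: "snd (Pt c t) = t" by (simp add: Pt_def)

lemma M_char: "x \<in> cantor_fan_model \<longleftrightarrow> (\<exists>c\<in>cantor_set. \<exists>t\<in>{0..1}. x = Pt c t)"
proof -
  have "closed_segment (1/2::real, 0::real) (c, 1) = Pt c ` {0..1}" for c
    unfolding closed_segment_def Pt_def by (auto simp: algebra_simps)
  then show ?thesis unfolding cantor_fan_model_def by auto
qed

lemma Pt_in_M: "c \<in> cantor_set \<Longrightarrow> 0 \<le> t \<Longrightarrow> t \<le> 1 \<Longrightarrow> Pt c t \<in> cantor_fan_model"
proof -
  assume "c \<in> cantor_set" "0 \<le> t" "t \<le> 1"
  then have "\<exists>c'\<in>cantor_set. \<exists>t'\<in>{0..1}. Pt c t = Pt c' t'" by (intro bexI[of _ c] bexI[of _ t]) auto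
  then show ?thesis by (simp only: M_char)
qed

lemma M_point:
  assumes "x \<in> cantor_fan_model" "x \<noteq> (1/2, 0)"
  shows "cfun x \<in> cantor_set \<and> 0 < snd x \<and> snd x \<le> 1 \<and> x = Pt (cfun x) (snd x)"
proof -
  obtain c t where c: "c \<in> cantor_set" "t \<in> {0..1}" "x = Pt c t" using assms M_char by auto
  have "t \<noteq> 0" using c assms by (auto simp: Pt_def)
  then show ?thesis using c by (auto simp: cfun_Pt)
qed

lemma dist_Pt: "0 \<le> t \<Longrightarrow> t \<le> 1 \<Longrightarrow> dist (Pt c t) (Pt c' t) \<le> \<bar>c - c'\<bar>"
proof -
  assume t: "0 \<le> t" "t \<le> 1"
  have "dist (Pt c t) (Pt c' t) = \<bar>t*c - t*c'\<bar>"
    by (simp add: Pt_def dist_Pair_Pair dist_real_def)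
  also have "\<dots> = t * \<bar>c - c'\<bar>" using t by (simp add: abs_mult flip: right_diff_distrib)
  also have "\<dots> \<le> \<bar>c - c'\<bar>" using t by (simp add: mult_left_le_one_le)
  finally show ?thesis .
qed

lemma one_leg:
  assumes "connected S" "S \<subseteq> cantor_fan_model" "(1/2, 0) \<notin> S" "S \<noteq> {}"
  shows "\<exists>c\<in>cantor_set. \<forall>x\<in>S. x = Pt c (snd x) \<and> 0 < snd x \<and> snd x \<le> 1"
proof -
  have pt: "\<And>x. x \<in> S \<Longrightarrow> cfun x \<in> cantor_set \<and> 0 < snd x \<and> snd x \<le> 1 \<and> x = Pt (cfun x) (snd x)"
    using M_point assms by blast
  have "continuous_on S cfun"
    unfolding cfun_def using pt by (intro continuous_intros) (auto simp del: snd_Pt, fastforce)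
  then have con: "connected (cfun ` S)" using assms(1) connected_continuous_image by blast
  obtain x0 where x0: "x0 \<in> S" using assms by auto
  have "\<forall>x\<in>S. cfun x = cfun x0"
  proof (rule ccontr)
    assume "\<not> ?thesis"
    then obtain x where x: "x \<in> S" "cfun x \<noteq> cfun x0" by auto
    define a where "a = min (cfun x) (cfun x0)"
    define b where "b = max (cfun x) (cfun x0)"
    have "a < b" using x by (auto simp: a_def b_def)
    have "a \<in> cfun ` S" "b \<in> cfun ` S" using x x0 by (auto simp: a_def b_def min_def max_def)
    then have "{a..b} \<subseteq> cfun ` S" using connected_contains_Icc con by blast
    also have "\<dots> \<subseteq> cantor_set" using pt by auto
    finally show False using cantor_no_interval \<open>a < b\<close> by blast
  qed
  then show ?thesis using pt x0 by metis
qed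


lemma key:
  fixes Y Q :: "(real\<times>real) set" and \<rho> :: "real\<times>real \<Rightarrow> real\<times>real"
  assumes cM: "compact cantor_fan_model" and YM: "Y \<subseteq> cantor_fan_model"
    and cont: "continuous_on cantor_fan_model \<rho>" and im: "\<rho> ` cantor_fan_model \<subseteq> Y"
    and fx: "\<forall>y\<in>Y. \<rho> y = y"
    and dense: "\<forall>q\<in>Y. \<forall>\<mu>>0. \<exists>y\<in>end_points Y. dist y q < \<mu>"
    and Qc: "connected Q" and QY: "Q \<subseteq> Y" and Qv: "(1/2,0) \<notin> Q"
    and x1: "x1 \<in> Q" and x2: "x2 \<in> Q" and x12: "x1 \<noteq> x2"
  shows False
proof -
  let ?M = cantor_fan_model
  obtain c0 where c0: "c0 \<in> cantor_set" "\<forall>x\<in>Q. x = Pt c0 (snd x) \<and> 0 < snd x \<and> snd x \<le> 1"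
    using one_leg[OF Qc _ Qv] QY YM x1 by blast
  have e1: "x1 = Pt c0 (snd x1)" "0 < snd x1" "snd x1 \<le> 1" using c0 x1 by blast+
  have e2: "x2 = Pt c0 (snd x2)" "0 < snd x2" "snd x2 \<le> 1" using c0 x2 by blast+
  have "snd x1 \<noteq> snd x2"
  proof
    assume h: "snd x1 = snd x2"
    from e1(1) have "x1 = Pt c0 (snd x2)" unfolding h .
    then have "x1 = x2" using e2(1)[symmetric] by (rule trans)
    then show False using x12 by contradiction
  qed
  define \<alpha> where "\<alpha> = min (snd x1) (snd x2)"
  define \<beta> where "\<beta> = max (snd x1) (snd x2)"
  have ab: "\<alpha> < \<beta>" "0 < \<alpha>" "\<beta> \<le> 1"
    using \<open>snd x1 \<noteq> snd x2\<close> e1(2,3) e2(2,3) by (auto simp: \<alpha>_def \<beta>_def)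
  have "connected (snd ` Q)" using Qc by (intro connected_continuous_image continuous_intros)
  moreover have "\<alpha> \<in> snd ` Q" "\<beta> \<in> snd ` Q" using x1 x2 by (auto simp: \<alpha>_def \<beta>_def min_def max_def)
  ultimately have "{\<alpha>..\<beta>} \<subseteq> snd ` Q" using connected_contains_Icc by blast
  then have SQ: "Pt c0 t \<in> Q" if tin: "t \<in> {\<alpha>..\<beta>}" for t
  proof -
    obtain x where x: "x \<in> Q" "t = snd x" using tin \<open>{\<alpha>..\<beta>} \<subseteq> snd ` Q\<close> by blast
    have "x = Pt c0 (snd x)" using c0 x(1) by blast
    then have "x = Pt c0 t" unfolding x(2)[symmetric] .
    then show ?thesis using x(1) by simp
  qed
  have SY: "\<And>t. t \<in> {\<alpha>..\<beta>} \<Longrightarrow> Pt c0 t \<in> Y \<and> \<rho> (Pt c0 t) = Pt c0 t"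
    using SQ QY fx by blast
  define gap where "gap = (\<beta> - \<alpha>)/4"
  define ts where "ts = \<alpha> + gap"
  define tq where "tq = \<alpha> + 2*gap"
  define tp where "tp = \<alpha> + 3*gap"
  define \<eta> where "\<eta> = min (gap/2) (\<alpha>/2)"
  have gap: "gap > 0" using ab by (simp add: gap_def)
  have ord: "\<alpha> < ts" "ts < tq" "tq < tp" "tp < \<beta>" "ts = tq - gap" "tp = tq + gap"
    using ab by (simp_all add: ts_def tq_def tp_def gap_def field_simps)
  have \<eta>: "\<eta> > 0" "\<eta> \<le> gap/2" "\<eta> \<le> \<alpha>/2" using gap ab by (auto simp: \<eta>_def)
  have "uniformly_continuous_on ?M \<rho>" using cM cont compact_uniformly_continuous by blast
  then obtain \<delta> where \<delta>: "\<delta> > 0" "\<And>x x'. x \<in> ?M \<Longrightarrow> x' \<in> ?M \<Longrightarrow> dist x' x < \<delta> \<Longrightarrow> dist (\<rho> x') (\<rho> x) < \<eta>"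
    unfolding uniformly_continuous_on_def using \<eta>(1) by metis
  have "continuous_on {x. snd x > 0} cfun"
    unfolding cfun_def by (intro continuous_intros) auto
  moreover have qin: "Pt c0 tq \<in> {x. snd x > 0}" using ab gap by (simp add: tq_def)
  ultimately obtain \<mu>0 where \<mu>0: "\<mu>0 > 0" "\<And>y. y \<in> {x. snd x > 0} \<Longrightarrow> dist y (Pt c0 tq) < \<mu>0 \<Longrightarrow> dist (cfun y) (cfun (Pt c0 tq)) < \<delta>"
    unfolding continuous_on_iff using \<delta>(1) by metis
  have cq: "cfun (Pt c0 tq) = c0" using qin by (simp add: cfun_Pt)
  define \<mu> where "\<mu> = min \<mu>0 (gap/2)"
  have "\<mu> > 0" using \<mu>0 gap by (simp add: \<mu>_def)
  have "tq \<in> {\<alpha>..\<beta>}" using ord by simp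
  then have "Pt c0 tq \<in> Y" using SY by blast
  then obtain y where y: "y \<in> end_points Y" "dist y (Pt c0 tq) < \<mu>" using dense \<open>\<mu> > 0\<close> by blast
  have yY: "y \<in> Y" using y unfolding end_points_def by auto
  have "dist (snd y) tq < gap/2" using y(2) dist_snd_le[of y "Pt c0 tq"] by (simp add: \<mu>_def)
  then have ty: "tq - gap/2 < snd y" "snd y < tq + gap/2" unfolding dist_real_def by linarith+
  have "y \<noteq> (1/2, 0)"
  proof
    assume "y = (1/2, 0)"
    then have "snd y = 0" by simp
    then show False using ty ab gap ord by linarith
  qed
  then have yP: "cfun y \<in> cantor_set" "y = Pt (cfun y) (snd y)" using M_point yY YM by blast+
  define c where "c = cfun y"
  have cK: "c \<in> cantor_set" using yP(1) by (simp add: c_def)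
  obtain ty where tyd: "snd y = ty" by simp
  have yeq: "y = Pt c ty" using yP(2) unfolding c_def[symmetric] tyd .
  have ty': "tq - gap/2 < ty" "ty < tq + gap/2" using ty tyd by simp_all
  have "dist (cfun y) c0 < \<delta>" using \<mu>0(2)[of y] y(2) ty ab gap cq ord by (simp add: \<mu>_def)
  then have cc0: "\<bar>c - c0\<bar> < \<delta>" by (simp add: c_def dist_real_def)
  have ts_pos: "0 < ts" and tp1: "tp \<le> 1" using ab ord by linarith+
  define T where "T = Pt c ` {ts..tp}"
  have TM: "T \<subseteq> ?M" using ts_pos tp1 cK Pt_in_M by (auto simp: T_def)
  have close: "dist (\<rho> (Pt c t)) (Pt c0 t) < \<eta>" if t: "t \<in> {ts..tp}" for t
  proof -
    have t01: "0 \<le> t" "t \<le> 1" using t ts_pos tp1 by simp_all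
    have tab: "t \<in> {\<alpha>..\<beta>}" using t ord by simp
    have "dist (Pt c t) (Pt c0 t) < \<delta>" using dist_Pt[OF t01, of c c0] cc0 by linarith
    moreover have "Pt c0 t \<in> ?M" using tab SY YM by blast
    moreover have "Pt c t \<in> ?M" using TM t by (auto simp: T_def)
    ultimately have "dist (\<rho> (Pt c t)) (\<rho> (Pt c0 t)) < \<eta>" using \<delta>(2) by blast
    then show ?thesis using SY[OF tab] by simp
  qed
  have hclose: "\<bar>snd (\<rho> (Pt c t)) - t\<bar> < \<eta>" if t: "t \<in> {ts..tp}" for t
    using close[OF t] dist_snd_le[of "\<rho> (Pt c t)" "Pt c0 t"] by (simp add: dist_real_def)
  define R where "R = \<rho> ` T"
  have "connected T" unfolding T_def Pt_def by (intro connected_continuous_image continuous_intros) auto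
  then have Rc: "connected R" unfolding R_def using continuous_on_subset[OF cont TM] connected_continuous_image by blast
  have RY: "R \<subseteq> Y" using im TM by (auto simp: R_def)
  have Rv: "(1/2, 0) \<notin> R"
  proof
    assume "(1/2, 0) \<in> R"
    then obtain t where t: "t \<in> {ts..tp}" "\<rho> (Pt c t) = (1/2, 0)" by (auto simp: R_def T_def)
    from hclose[OF t(1)] t have "t < \<eta>" by simp
    then show False using t(1) \<eta> ab ord by simp
  qed
  have tyin: "ty \<in> {ts..tp}" using ty' ord gap by simp
  have yR: "y \<in> R"
  proof -
    have "y \<in> T" using tyin unfolding yeq T_def by blast
    then show ?thesis using fx yY by (force simp: R_def)
  qed
  obtain c' where c': "\<forall>x\<in>R. x = Pt c' (snd x) \<and> 0 < snd x \<and> snd x \<le> 1"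
    using one_leg[OF Rc _ Rv] RY YM yR by blast
  have "c' = c"
  proof -
    have yc: "y = Pt c' (snd y)" "0 < snd y" using c' yR by blast+
    from yc(1) have "cfun y = cfun (Pt c' (snd y))" by (rule arg_cong)
    also have "\<dots> = c'" using cfun_Pt \<open>0 < snd y\<close> by simp
    finally show ?thesis by (simp add: c_def)
  qed
  define a where "a = snd (\<rho> (Pt c ts))"
  define b where "b = snd (\<rho> (Pt c tp))"
  have tsin: "ts \<in> {ts..tp}" and tpin: "tp \<in> {ts..tp}" using ord by simp_all
  have ay: "a < ty" using hclose[OF tsin] ty' \<eta> ord unfolding a_def by linarith
  have by': "ty < b" using hclose[OF tpin] ty' \<eta> ord unfolding b_def by linarith
  have "connected (snd ` R)" using Rc by (intro connected_continuous_image continuous_intros)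
  moreover have "a \<in> snd ` R" "b \<in> snd ` R" using tsin tpin by (auto simp: a_def b_def R_def T_def)
  ultimately have "{a..b} \<subseteq> snd ` R" using connected_contains_Icc by blast
  then have segR: "Pt c t \<in> Y" if tin: "t \<in> {a..b}" for t
  proof -
    obtain x where x: "x \<in> R" "t = snd x" using tin \<open>{a..b} \<subseteq> snd ` R\<close> by blast
    have "x = Pt c' (snd x)" using c' x(1) by blast
    then have "x = Pt c t" unfolding x(2)[symmetric] \<open>c' = c\<close> .
    then show ?thesis using x(1) RY by auto
  qed
  define g where "g = (\<lambda>u. Pt c (a + u * (b - a)))"
  have "path g" unfolding path_def g_def Pt_def by (intro continuous_intros) auto
  moreover have "inj_on g {0..1}"
  proof (rule inj_onI)
    fix u u' assume "g u = g u'"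
    then have "a + u * (b - a) = a + u' * (b - a)" unfolding g_def by (metis snd_Pt)
    then show "u = u'" using ay by' by simp
  qed
  ultimately have "arc g" by (simp add: arc_def)
  moreover have "path_image g \<subseteq> Y"
  proof
    fix z assume "z \<in> path_image g"
    then obtain u where u: "u \<in> {0..1}" "z = g u" by (auto simp: path_image_def)
    have "a + u * (b - a) \<le> a + 1 * (b - a)" using u ay by' by (intro add_left_mono mult_right_mono) auto
    moreover have "a \<le> a + u * (b - a)" using u ay by' by simp
    ultimately show "z \<in> Y" using segR u by (simp add: g_def)
  qed
  ultimately have arc: "arc_in Y g" by (simp add: arc_in_def)
  define u0 where "u0 = (ty - a) / (b - a)"
  have "g u0 = y" using ay by' unfolding yeq by (simp add: g_def u0_def)
  moreover have "u0 \<in> {0..1}" using ay by' by (simp add: u0_def)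
  ultimately have "y \<in> path_image g" by (force simp: path_image_def)
  moreover have "y \<noteq> pathstart g" "y \<noteq> pathfinish g"
    using ay by' unfolding yeq by (auto simp: pathstart_def pathfinish_def g_def Pt_def)
  ultimately show False using y(1) arc unfolding end_points_def by blast
qed


theorem mainTheorem6:
  fixes L C :: "'a::metric_space set" and f :: "'a \<Rightarrow> 'a"
  assumes "lelek_fan L"
    and "C \<subseteq> L" and "continuum C" and "cantor_fan C"
    and "embedding_on L f" and "f ` L \<subseteq> C"
  shows "\<not> (\<exists>r. retraction L (f ` L) r)"
proof
  assume "\<exists>r. retraction L (f ` L) r"
  then obtain r where rc: "continuous_on L r" and rim: "r ` L \<subseteq> f ` L" and rfix: "\<forall>x\<in>f ` L. r x = x"
    unfolding retraction_def by blast
  let ?M = cantor_fan_model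
  obtain h h' where hom: "homeomorphism C ?M h h'"
    using assms(4) unfolding cantor_fan_def homeomorphic_def by blast
  obtain fi where fhom: "homeomorphism L (f ` L) f fi"
    using assms(5) unfolding embedding_on_def by blast
  have hC: "continuous_on C h" "h ` C = ?M" "continuous_on ?M h'" "h' ` ?M = C"
    "\<And>x. x \<in> C \<Longrightarrow> h' (h x) = x" "\<And>y. y \<in> ?M \<Longrightarrow> h (h' y) = y"
    using hom unfolding homeomorphism_def by auto
  have fL: "continuous_on L f" "continuous_on (f ` L) fi" "\<And>x. x \<in> L \<Longrightarrow> fi (f x) = x"
    "fi ` (f ` L) = L"
    using fhom unfolding homeomorphism_def by auto
  have cM: "compact ?M" using hC(1,2) assms(3) unfolding continuum_def
    by (metis compact_continuous_image)
  define Y where "Y = h ` f ` L"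
  define \<rho> where "\<rho> = h \<circ> r \<circ> h'"
  have YM: "Y \<subseteq> ?M" using assms(6) hC(2) by (auto simp: Y_def)
  have contr: "continuous_on ?M \<rho>"
  proof -
    have "continuous_on C r" using rc assms(2) continuous_on_subset by blast
    moreover have "r ` C \<subseteq> C" using rim assms(2,6) by auto
    ultimately have "continuous_on C (h \<circ> r)"
      using hC(1) continuous_on_compose continuous_on_subset by blast
    then show ?thesis unfolding \<rho>_def using hC(3,4) continuous_on_compose
      by (metis comp_assoc)
  qed
  have im: "\<rho> ` ?M \<subseteq> Y"
  proof
    fix z assume "z \<in> \<rho> ` ?M"
    then obtain y where y: "y \<in> ?M" "z = \<rho> y" by auto
    have "h' y \<in> L" using y hC(4) assms(2) by auto
    then have "r (h' y) \<in> f ` L" using rim by auto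
    then show "z \<in> Y" using y by (auto simp: \<rho>_def Y_def)
  qed
  have fx: "\<forall>y\<in>Y. \<rho> y = y"
  proof
    fix y assume "y \<in> Y"
    then obtain z where z: "z \<in> f ` L" "y = h z" by (auto simp: Y_def)
    have "z \<in> C" using z assms(6) by auto
    moreover have "r z = z" using z(1) rfix by blast
    ultimately show "\<rho> y = y" using z hC(5) by (simp add: \<rho>_def)
  qed
  define \<phi> where "\<phi> = h \<circ> f"
  define \<psi> where "\<psi> = fi \<circ> h'"
  have fLC: "\<And>x. x \<in> L \<Longrightarrow> f x \<in> C" using assms(6) by auto
  have psiphi: "\<And>x. x \<in> L \<Longrightarrow> \<psi> (\<phi> x) = x" using fLC hC(5) fL(3) by (simp add: \<phi>_def \<psi>_def)
  have phiY: "\<phi> ` L = Y" by (simp add: \<phi>_def Y_def image_comp)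
  have phipsi: "\<And>y. y \<in> Y \<Longrightarrow> \<phi> (\<psi> y) = y" using psiphi phiY by force
  have psiL: "\<psi> ` Y \<subseteq> L" using psiphi phiY by force
  have phic: "continuous_on L \<phi>"
    unfolding \<phi>_def using fL(1) hC(1) fLC continuous_on_compose continuous_on_subset
    by (metis image_subset_iff)
  have psic: "continuous_on Y \<psi>"
  proof -
    have "continuous_on Y h'" using hC(3) YM continuous_on_subset by blast
    moreover have "h' ` Y = f ` L" unfolding Y_def using hC(5) assms(6) by force
    ultimately show ?thesis unfolding \<psi>_def using fL(2) continuous_on_compose by metis
  qed
  have ep: "\<phi> e \<in> end_points Y" if e: "e \<in> end_points L" for e
  proof -
    have eL: "e \<in> L" using e by (simp add: end_points_def)
    have "\<phi> e \<in> Y" using eL phiY by blast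
    moreover have "\<phi> e = pathstart g \<or> \<phi> e = pathfinish g"
      if g: "arc_in Y g" "\<phi> e \<in> path_image g" for g
    proof -
      have gY: "path_image g \<subseteq> Y" and ag: "arc g" using g by (auto simp: arc_in_def)
      have "path (\<psi> \<circ> g)" using ag gY psic unfolding arc_def
        by (metis path_continuous_image continuous_on_subset)
      moreover have "inj_on (\<psi> \<circ> g) {0..1}"
      proof (rule comp_inj_on)
        show "inj_on g {0..1}" using ag by (simp add: arc_def)
        show "inj_on \<psi> (g ` {0..1})" using gY phipsi unfolding path_image_def
          by (metis inj_on_inverseI subset_iff)
      qed
      ultimately have "arc (\<psi> \<circ> g)" by (simp add: arc_def)
      moreover have "path_image (\<psi> \<circ> g) \<subseteq> L" using gY psiL by (auto simp: path_image_compose)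
      ultimately have "arc_in L (\<psi> \<circ> g)" by (simp add: arc_in_def)
      moreover have "e \<in> path_image (\<psi> \<circ> g)" using g(2) psiphi eL
        by (metis image_eqI path_image_compose)
      ultimately have "e = pathstart (\<psi> \<circ> g) \<or> e = pathfinish (\<psi> \<circ> g)"
        using e unfolding end_points_def by blast
      moreover have "g 0 \<in> Y" "g 1 \<in> Y" using gY by (auto simp: path_image_def)
      ultimately show ?thesis using phipsi unfolding pathstart_def pathfinish_def
        by (metis comp_apply)
    qed
    ultimately show ?thesis unfolding end_points_def by blast
  qed
  have dense: "\<forall>q\<in>Y. \<forall>\<mu>>0. \<exists>y\<in>end_points Y. dist y q < \<mu>"
  proof (intro ballI allI impI)
    fix q and \<mu> :: real assume q: "q \<in> Y" and mu: "\<mu> > 0"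
    obtain l where l: "l \<in> L" "q = \<phi> l" using q phiY by blast
    obtain d where d: "d > 0" "\<And>x. x \<in> L \<Longrightarrow> dist x l < d \<Longrightarrow> dist (\<phi> x) (\<phi> l) < \<mu>"
      using phic l(1) mu unfolding continuous_on_iff by metis
    have "l \<in> closure (end_points L)" using assms(1) l(1) unfolding lelek_fan_def by simp
    then obtain e where e: "e \<in> end_points L" "dist e l < d" using d(1) closure_approachable by metis
    have "e \<in> L" using e by (simp add: end_points_def)
    then show "\<exists>y\<in>end_points Y. dist y q < \<mu>" using ep e d l by blast
  qed
  obtain v0 where "smooth_fan L v0" using assms(1) unfolding lelek_fan_def by blast
  then have "ramification_point L v0" unfolding smooth_fan_def fan_top_def by blast
  then obtain g1 g2 where g: "arc_in L g1" "arc_in L g2" "pathstart g1 = v0" "pathstart g2 = v0"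
    "path_image g1 \<inter> path_image g2 = {v0}"
    unfolding ramification_point_def by blast
  have "\<exists>g. arc_in L g \<and> (\<forall>t\<in>{1/2..1}. \<phi> (g t) \<noteq> (1/2, 0))"
  proof (rule ccontr)
    assume "\<not> ?thesis"
    then obtain t1 t2 where t: "t1 \<in> {1/2..1}" "t2 \<in> {1/2..1}" "\<phi> (g1 t1) = (1/2,0)" "\<phi> (g2 t2) = (1/2,0)"
      using g(1,2) by blast
    have in1: "g1 t1 \<in> path_image g1" "g2 t2 \<in> path_image g2" using t by (auto simp: path_image_def)
    have "g1 t1 \<in> L" "g2 t2 \<in> L" using in1 g(1,2) by (auto simp: arc_in_def)
    then have "g1 t1 = g2 t2" using t psiphi by metis
    then have "g1 t1 = v0" using in1 g(5) by auto
    then have "g1 t1 = g1 0" using g(3) by (simp add: pathstart_def)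
    moreover have "inj_on g1 {0..1}" using g(1) by (simp add: arc_in_def arc_def)
    ultimately have "t1 = 0" using t(1) by (auto dest: inj_onD)
    then show False using t(1) by simp
  qed
  then obtain g where ga: "arc_in L g" and gv: "\<forall>t\<in>{1/2..1}. \<phi> (g t) \<noteq> (1/2, 0)" by blast
  have gL: "g ` {0..1} \<subseteq> L" and gc: "continuous_on {0..1} g" and gi: "inj_on g {0..1}"
    using ga by (auto simp: arc_in_def arc_def path_def path_image_def)
  define Q where "Q = (\<phi> \<circ> g) ` {1/2..1}"
  have sub: "{1/2..1} \<subseteq> {0..1::real}" by auto
  have "continuous_on {1/2..1} (\<phi> \<circ> g)"
    using continuous_on_compose[OF continuous_on_subset[OF gc sub]] phic gL sub
      continuous_on_subset by (metis image_mono order_trans)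
  then have Qc: "connected Q" unfolding Q_def by (intro connected_continuous_image) auto
  have "g ` {1/2..1} \<subseteq> L" using gL sub by auto
  then have "Q \<subseteq> \<phi> ` L" unfolding Q_def image_comp[symmetric] by (rule image_mono)
  then have QY: "Q \<subseteq> Y" using phiY by simp
  have Qv: "(1/2, 0) \<notin> Q" unfolding Q_def using gv by auto
  have x1: "\<phi> (g (1/2)) \<in> Q" and x2: "\<phi> (g 1) \<in> Q" unfolding Q_def by auto
  have "\<phi> (g (1/2)) \<noteq> \<phi> (g 1)"
  proof
    assume "\<phi> (g (1/2)) = \<phi> (g 1)"
    moreover have "g (1/2) \<in> L" "g 1 \<in> L" using gL by auto
    ultimately have "g (1/2) = g 1" using psiphi by metis
    then show False using gi by (auto dest: inj_onD)
  qed
  show False using key[OF cM YM contr im fx dense Qc QY Qv x1 x2 \<open>\<phi> (g (1/2)) \<noteq> \<phi> (g 1)\<close>] .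
qed

end
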